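(* Let $A$ be an $n\times n$ and $B$ an $m\times m$ complex matrix, and for $k=1,\dots,m$ let $1\le i_k,j_k\le n$ and $\alpha_k,\beta_k\in\mathbb{C}$. Let $M$ be the $(n+m)\times(n+m)$ block matrix $M=\begin{bmatrix}A & [\alpha_1\mathbf{e}_{i_1},\dots,\alpha_m\mathbf{e}_{i_m}]\\ [\beta_1\mathbf{e}_{j_1},\dots,\beta_m\mathbf{e}_{j_m}]^T & B\end{bmatrix}$, where $\mathbf{e}_i$ is the $i$-th standard basis column vector of $\mathbb{C}^n$ (so the $k$-th column of the upper-right block is $\alpha_k\mathbf{e}_{i_k}$ and the $k$-th row of the lower-left block is $\beta_k\mathbf{e}_{j_k}^T$). Then $$\det(M)=\sum_{S,T}\varepsilon_{S,T}\,\alpha_T\beta_S\,B_{S,T}A_{S,T}$$ for some signs $\varepsilon_{S,T}\in\{\pm1\}$, where the sum is over all pairs $S,T\subseteq\{1,\dots,m\}$ with $|S|=|T|$.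
   Context: For $S,T\subseteq\{1,\dots,m\}$ with $|S|=|T|$: $B_{S,T}$ is the determinant of the matrix obtained from $B$ by deleting the rows indexed by $S$ and the columns indexed by $T$ (the determinant of the empty matrix being $1$). Let $J(S)=\{j_k: k\in S\}$ and $I(T)=\{i_k:k\in T\}$; $A_{S,T}$ is the determinant of the matrix obtained from $A$ by deleting the rows indexed by $I(T)$ and the columns indexed by $J(S)$ if $|I(T)|=|J(S)|=|T|=|S|$, and $A_{S,T}=0$ otherwise. Finally $\alpha_T=\prod_{k\in T}\alpha_k$ and $\beta_S=\prod_{k\in S}\beta_k$. *)

theory Defs
  imports "Jordan_Normal_Form.Determinant" "Jordan_Normal_Form.DL_Submatrix"
begin

text \<open>Indices are 0-based: rows/columns of A are 0..<n, of B are 0..<m, and k ranges over 0..<m.\<close>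

definition del_rows_cols :: "'a mat \<Rightarrow> nat set \<Rightarrow> nat set \<Rightarrow> 'a mat" where
  "del_rows_cols X R C = submatrix X (- R) (- C)"

definition upper_right_blk :: "nat \<Rightarrow> nat \<Rightarrow> (nat \<Rightarrow> nat) \<Rightarrow> (nat \<Rightarrow> complex) \<Rightarrow> complex mat" where
  "upper_right_blk n m i \<alpha> = mat n m (\<lambda>(r, k). if r = i k then \<alpha> k else 0)"

definition lower_left_blk :: "nat \<Rightarrow> nat \<Rightarrow> (nat \<Rightarrow> nat) \<Rightarrow> (nat \<Rightarrow> complex) \<Rightarrow> complex mat" where
  "lower_left_blk n m j \<beta> = mat m n (\<lambda>(k, c). if c = j k then \<beta> k else 0)"

definition blockM :: "complex mat \<Rightarrow> complex mat \<Rightarrow> (nat \<Rightarrow> nat) \<Rightarrow> (nat \<Rightarrow> nat)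
    \<Rightarrow> (nat \<Rightarrow> complex) \<Rightarrow> (nat \<Rightarrow> complex) \<Rightarrow> complex mat" where
  "blockM A B i j \<alpha> \<beta> = four_block_mat A (upper_right_blk (dim_row A) (dim_row B) i \<alpha>)
      (lower_left_blk (dim_row A) (dim_row B) j \<beta>) B"

definition B_minor :: "complex mat \<Rightarrow> nat set \<Rightarrow> nat set \<Rightarrow> complex" where
  "B_minor B S T = det (del_rows_cols B S T)"

definition A_minor :: "complex mat \<Rightarrow> (nat \<Rightarrow> nat) \<Rightarrow> (nat \<Rightarrow> nat) \<Rightarrow> nat set \<Rightarrow> nat set \<Rightarrow> complex" where
  "A_minor A i j S T =
     (if card (i ` T) = card T \<and> card (j ` S) = card S \<and> card T = card S
      then det (del_rows_cols A (i ` T) (j ` S)) else 0)"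

end

theory Submission
  imports Defs
begin

lemma pick_eqI:
  assumes "x \<in> I" "card {a\<in>I. a < x} = p"
  shows "pick I p = x"
  using pick_card_in_set[OF assms(1)] assms(2) by simp

lemma card_lt_range:
  assumes "I \<subseteq> {..<N}" shows "{i. i < N \<and> i \<in> I} = I"
  using assms by auto

lemma dim_submatrix_sq:
  assumes "X \<in> carrier_mat N N" "I \<subseteq> {..<N}" "J \<subseteq> {..<N}"
  shows "dim_row (submatrix X I J) = card I" "dim_col (submatrix X I J) = card J"
  using assms by (auto simp: dim_submatrix card_lt_range)

lemma pick_in_fin: assumes "finite I" "p < card I" shows "pick I p \<in> I"
  using pick_in_set assms by blast

lemma pick_inj_fin: assumes "finite I" "p < card I" "q < card I" "pick I p = pick I q"
  shows "p = q"
  using pick_mono[of q I p] pick_mono[of p I q] assms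
  by (metis less_irrefl_nat nat_neq_iff)

lemma pick_delete:
  assumes "finite I" "r \<in> I" "a < card I - 1"
  shows "pick (I - {r}) a = pick I (if a < card {b\<in>I. b < r} then a else Suc a)"
proof -
  let ?p = "card {b\<in>I. b < r}"
  have pr: "pick I ?p = r" using pick_card_in_set[OF assms(2)] .
  have cI: "card I > 0" using assms by (auto simp: card_gt_0_iff)
  have plt: "?p < card I"
    using assms by (intro psubset_card_mono) auto
  define a' where "a' = (if a < ?p then a else Suc a)"
  have a'lt: "a' < card I" using assms(3) cI unfolding a'_def by auto
  have xne: "pick I a' \<noteq> r"
    using pick_inj_fin[OF assms(1) a'lt plt] pr unfolding a'_def by auto
  have xin: "pick I a' \<in> I" using pick_in_fin[OF assms(1) a'lt] .
  show ?thesis unfolding a'_def[symmetric]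
  proof (rule pick_eqI)
    show "pick I a' \<in> I - {r}" using xin xne by auto
    show "card {b \<in> I - {r}. b < pick I a'} = a"
    proof (cases "a < ?p")
      case True
      then have "pick I a' < pick I ?p" unfolding a'_def using plt by (intro pick_mono) auto
      then have "pick I a' < r" using pr by simp
      then have "{b \<in> I - {r}. b < pick I a'} = {b\<in>I. b < pick I a'}" by auto
      then show ?thesis using card_pick[of a' I] a'lt True unfolding a'_def by auto
    next
      case False
      then have "pick I ?p < pick I a'" unfolding a'_def using a'lt unfolding a'_def by (intro pick_mono) auto
      then have "r < pick I a'" using pr by simp
      then have e: "{b \<in> I - {r}. b < pick I a'} = {b\<in>I. b < pick I a'} - {r}" 
        and rin: "r \<in> {b\<in>I. b < pick I a'}" using assms(2) by auto
      have "card {b\<in>I. b < pick I a'} = a'" using card_pick[of a' I] a'lt by auto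
      then show ?thesis unfolding e using rin False unfolding a'_def
        by (simp add: assms(1))
    qed
  qed
qed

lemma det_nonsq: "dim_row X \<noteq> dim_col X \<Longrightarrow> det X = 0"
  unfolding det_def by simp

lemma submatrix_carrier:
  assumes "X \<in> carrier_mat N N" "I \<subseteq> {..<N}" "J \<subseteq> {..<N}"
  shows "submatrix X I J \<in> carrier_mat (card I) (card J)"
  using dim_submatrix_sq[OF assms] unfolding carrier_mat_def by auto

lemma submatrix_idx:
  assumes "X \<in> carrier_mat N N" "I \<subseteq> {..<N}" "J \<subseteq> {..<N}" "a < card I" "b < card J"
  shows "submatrix X I J $$ (a,b) = X $$ (pick I a, pick J b)"
  using assms by (intro submatrix_index) (auto simp: card_lt_range)

lemma Lcol:
  fixes X :: "'a::comm_ring_1 mat"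
  assumes X: "X \<in> carrier_mat N N" and I: "I \<subseteq> {..<N}" and J: "J \<subseteq> {..<N}"
    and r: "r \<in> I" and c: "c \<in> J" and z: "\<forall>r'\<in>I. r' \<noteq> r \<longrightarrow> X $$ (r',c) = 0"
  shows "\<exists>e. (e = 1 \<or> e = -1) \<and> det (submatrix X I J) = e * X $$ (r,c) * det (submatrix X (I - {r}) (J - {c}))"
proof (cases "card I = card J")
  case False
  have fI: "finite I" "finite J" using I J finite_subset by auto
  have "card I > 0" "card J > 0" using r c fI by (auto simp: card_gt_0_iff)
  then have "card (I - {r}) \<noteq> card (J - {c})" using False r c fI by auto
  moreover have "I - {r} \<subseteq> {..<N}" "J - {c} \<subseteq> {..<N}" using I J by auto
  ultimately have "det (submatrix X (I - {r}) (J - {c})) = 0"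
    using dim_submatrix_sq[OF X] by (intro det_nonsq) auto
  moreover have "det (submatrix X I J) = 0" using False dim_submatrix_sq[OF X I J] by (intro det_nonsq) auto
  ultimately show ?thesis by auto
next
  case True
  have fI: "finite I" "finite J" using I J finite_subset by auto
  define K where "K = card I"
  define Y where "Y = submatrix X I J"
  have Y: "Y \<in> carrier_mat K K" unfolding Y_def K_def using submatrix_carrier[OF X I J] True by simp
  define p where "p = card {b\<in>I. b < r}"
  define q where "q = card {b\<in>J. b < c}"
  have plt: "p < K" unfolding p_def K_def using r fI by (intro psubset_card_mono) auto
  have qlt: "q < K" unfolding q_def K_def True using c fI by (intro psubset_card_mono) auto
  have pp: "pick I p = r" unfolding p_def using pick_card_in_set[OF r] .
  have pq: "pick J q = c" unfolding q_def using pick_card_in_set[OF c] .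
  have "det Y = (\<Sum>a<K. Y $$ (a,q) * cofactor Y a q)" by (rule laplace_expansion_column[OF Y qlt])
  also have "\<dots> = Y $$ (p,q) * cofactor Y p q"
  proof (rule sum.remove[of "{..<K}" p, THEN trans])
    show "finite {..<K}" by simp
    show "p \<in> {..<K}" using plt by simp
    have "(\<Sum>a\<in>{..<K} - {p}. Y $$ (a, q) * cofactor Y a q) = 0"
    proof (rule sum.neutral, intro ballI)
      fix a assume a: "a \<in> {..<K} - {p}"
      have "Y $$ (a,q) = X $$ (pick I a, pick J q)" unfolding Y_def
        using a qlt True by (intro submatrix_idx[OF X I J]) (auto simp: K_def)
      moreover have "pick I a \<noteq> r" using pick_inj_fin[OF fI(1), of a p] a plt pp by (auto simp: K_def)
      moreover have "pick I a \<in> I" using pick_in_fin[OF fI(1), of a] a by (auto simp: K_def)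
      ultimately show "Y $$ (a, q) * cofactor Y a q = 0" using z pq by simp
    qed
    then show "Y $$ (p, q) * cofactor Y p q + (\<Sum>a\<in>{..<K} - {p}. Y $$ (a, q) * cofactor Y a q) =
      Y $$ (p, q) * cofactor Y p q" by simp
  qed
  also have "Y $$ (p,q) = X $$ (r,c)" unfolding Y_def using submatrix_idx[OF X I J, of p q] plt qlt pp pq True
    by (simp add: K_def)
  finally have dY: "det Y = X $$ (r,c) * cofactor Y p q" .
  have md: "mat_delete Y p q = submatrix X (I - {r}) (J - {c})"
  proof (rule eq_matI)
    have cr: "card (I - {r}) = K - 1" "card (J - {c}) = K - 1" using r c fI True by (auto simp: K_def)
    have I': "I - {r} \<subseteq> {..<N}" and J': "J - {c} \<subseteq> {..<N}" using I J by auto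
    show dr: "dim_row (mat_delete Y p q) = dim_row (submatrix X (I - {r}) (J - {c}))"
      using Y dim_submatrix_sq[OF X I' J'] cr by simp
    show dc: "dim_col (mat_delete Y p q) = dim_col (submatrix X (I - {r}) (J - {c}))"
      using Y dim_submatrix_sq[OF X I' J'] cr by simp
    fix a b assume a: "a < dim_row (submatrix X (I - {r}) (J - {c}))" and b: "b < dim_col (submatrix X (I - {r}) (J - {c}))"
    then have a': "a < K - 1" and b': "b < K - 1" using dim_submatrix_sq[OF X I' J'] cr by auto
    have "mat_delete Y p q $$ (a,b) = Y $$ (if a < p then a else Suc a, if b < q then b else Suc b)"
      unfolding mat_delete_def using Y a' b' by auto
    also have "\<dots> = X $$ (pick I (if a < p then a else Suc a), pick J (if b < q then b else Suc b))"
      unfolding Y_def using a' b' True by (intro submatrix_idx[OF X I J]) (auto simp: K_def)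
    also have "\<dots> = X $$ (pick (I - {r}) a, pick (J - {c}) b)"
      using pick_delete[OF fI(1) r, of a] pick_delete[OF fI(2) c, of b] a' b' True
      unfolding p_def q_def K_def by auto
    also have "\<dots> = submatrix X (I - {r}) (J - {c}) $$ (a,b)"
      using a' b' cr by (intro submatrix_idx[OF X I' J', symmetric]) auto
    finally show "mat_delete Y p q $$ (a,b) = submatrix X (I - {r}) (J - {c}) $$ (a,b)" .
  qed
  have "det Y = (-1)^(p+q) * X $$ (r,c) * det (submatrix X (I - {r}) (J - {c}))"
    unfolding dY cofactor_def md by (simp add: ac_simps)
  moreover have "(-1::'a)^(p+q) = 1 \<or> (-1::'a)^(p+q) = -1" by (cases "even (p+q)") auto
  ultimately show ?thesis unfolding Y_def by blast
qed

lemma Zcol: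
  fixes X :: "'a::comm_ring_1 mat"
  assumes X: "X \<in> carrier_mat N N" and I: "I \<subseteq> {..<N}" and J: "J \<subseteq> {..<N}"
    and c: "c \<in> J" and z: "\<forall>r'\<in>I. X $$ (r',c) = 0"
  shows "det (submatrix X I J) = 0"
proof (cases "card I = card J")
  case False
  then show ?thesis using dim_submatrix_sq[OF X I J] by (intro det_nonsq) auto
next
  case True
  have fI: "finite I" "finite J" using I J finite_subset by auto
  define K where "K = card I"
  define Y where "Y = submatrix X I J"
  have Y: "Y \<in> carrier_mat K K" unfolding Y_def K_def using submatrix_carrier[OF X I J] True by simp
  define q where "q = card {b\<in>J. b < c}"
  have qlt: "q < K" unfolding q_def K_def True using c fI by (intro psubset_card_mono) auto
  have pq: "pick J q = c" unfolding q_def using pick_card_in_set[OF c] .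
  have "det Y = (\<Sum>a<K. Y $$ (a,q) * cofactor Y a q)" by (rule laplace_expansion_column[OF Y qlt])
  also have "\<dots> = 0"
  proof (rule sum.neutral, intro ballI)
    fix a assume a: "a \<in> {..<K}"
    have "Y $$ (a,q) = X $$ (pick I a, pick J q)" unfolding Y_def
      using a qlt True by (intro submatrix_idx[OF X I J]) (auto simp: K_def)
    moreover have "pick I a \<in> I" using pick_in_fin[OF fI(1), of a] a by (auto simp: K_def)
    ultimately show "Y $$ (a, q) * cofactor Y a q = 0" using z pq by simp
  qed
  finally show ?thesis unfolding Y_def .
qed

lemma transpose_submatrix:
  "transpose_mat (submatrix X I J) = submatrix (transpose_mat X) J I"
  by (rule eq_matI) (auto simp: dim_submatrix submatrix_def pick_le)

lemma det_submatrix_transpose: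
  fixes X :: "'a::comm_ring_1 mat"
  assumes X: "X \<in> carrier_mat N N" and I: "I \<subseteq> {..<N}" and J: "J \<subseteq> {..<N}"
  shows "det (submatrix X I J) = det (submatrix (transpose_mat X) J I)"
proof (cases "card I = card J")
  case True
  then show ?thesis using submatrix_carrier[OF X I J] det_transpose transpose_submatrix by metis
next
  case False
  have XT: "transpose_mat X \<in> carrier_mat N N" using X by auto
  show ?thesis using False dim_submatrix_sq[OF X I J] dim_submatrix_sq[OF XT J I] det_nonsq by metis
qed

lemma GL:
  fixes X :: "'a::comm_ring_1 mat"
  assumes X: "X \<in> carrier_mat N N" and fT: "finite T"
    and rc: "\<forall>k\<in>T. colf k < N \<and> rowf k < N" and inj: "inj_on colf T"
    and z: "\<forall>k\<in>T. \<forall>r<N. r \<noteq> rowf k \<longrightarrow> X $$ (r, colf k) = 0"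
    and v: "\<forall>k\<in>T. X $$ (rowf k, colf k) = v k"
  shows "I \<subseteq> {..<N} \<Longrightarrow> J \<subseteq> {..<N} \<Longrightarrow> rowf ` T \<subseteq> I \<Longrightarrow> colf ` T \<subseteq> J \<Longrightarrow>
    \<exists>e. (e = 1 \<or> e = -1) \<and> det (submatrix X I J) = e * (if inj_on rowf T then
        (\<Prod>k\<in>T. v k) * det (submatrix X (I - rowf ` T) (J - colf ` T)) else 0)"
  using fT rc inj z v
proof (induction T arbitrary: I J rule: finite_induct)
  case empty
  then show ?case by (intro exI[of _ 1]) auto
next
  case (insert x F)
  have F: "\<forall>k\<in>F. colf k < N \<and> rowf k < N" "inj_on colf F"
      "\<forall>k\<in>F. \<forall>r<N. r \<noteq> rowf k \<longrightarrow> X $$ (r, colf k) = 0" "\<forall>k\<in>F. X $$ (rowf k, colf k) = v k"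
    using insert.prems by auto
  obtain e where e: "e = 1 \<or> e = -1" and de: "det (submatrix X I J) = e * (if inj_on rowf F then
        (\<Prod>k\<in>F. v k) * det (submatrix X (I - rowf ` F) (J - colf ` F)) else 0)"
    using insert.IH[OF insert.prems(1,2) _ _ F] insert.prems(3,4) by auto
  define I' where "I' = I - rowf ` F"
  define J' where "J' = J - colf ` F"
  have I': "I' \<subseteq> {..<N}" and J': "J' \<subseteq> {..<N}" using insert.prems unfolding I'_def J'_def by auto
  have cx: "colf x \<in> J'" using insert.prems insert.hyps unfolding J'_def by (auto simp: inj_on_def)
  show ?case
  proof (cases "inj_on rowf F")
    case False
    then have "\<not> inj_on rowf (insert x F)" by (meson inj_on_subset subset_insertI)
    then show ?thesis using de e False by (intro exI[of _ e]) auto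
  next
    case True
    note injF = True
    show ?thesis
    proof (cases "rowf x \<in> rowf ` F")
      case True
      then have ni: "\<not> inj_on rowf (insert x F)" using insert.hyps by (auto simp: inj_on_def)
      have "det (submatrix X I' J') = 0"
      proof (rule Zcol[OF X I' J' cx], intro ballI)
        fix r assume "r \<in> I'"
        then have "r < N" "r \<noteq> rowf x" using I' True unfolding I'_def by auto
        then show "X $$ (r, colf x) = 0" using insert.prems(7) by auto
      qed
      then show ?thesis using de e injF ni unfolding I'_def J'_def by (intro exI[of _ e]) auto
    next
      case False
      have ij: "inj_on rowf (insert x F)" using injF False by auto
      have rx: "rowf x \<in> I'" using insert.prems False unfolding I'_def by auto
      obtain e' where e': "e' = 1 \<or> e' = -1" and de': "det (submatrix X I' J') =
          e' * X $$ (rowf x, colf x) * det (submatrix X (I' - {rowf x}) (J' - {colf x}))"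
        using Lcol[OF X I' J' rx cx] I' insert.prems(7) by auto
      have s1: "I' - {rowf x} = I - rowf ` insert x F" unfolding I'_def by auto
      have s2: "J' - {colf x} = J - colf ` insert x F" unfolding J'_def by auto
      have "det (submatrix X I J) = (e * e') * ((\<Prod>k\<in>insert x F. v k) *
          det (submatrix X (I - rowf ` insert x F) (J - colf ` insert x F)))"
        using de de' injF insert.prems(8) insert.hyps unfolding I'_def[symmetric] J'_def[symmetric] s1 s2
        by (simp add: ac_simps)
      moreover have "e * e' = 1 \<or> e * e' = -1" using e e' by auto
      ultimately show ?thesis using ij by (intro exI[of _ "e * e'"]) auto
    qed
  qed
qed

lemma submatrix_restrict:
  assumes Y: "Y \<in> carrier_mat K K"
  shows "submatrix Y I J = submatrix Y {x. x<K \<and> x\<in>I} {x. x<K \<and> x\<in>J}"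
proof (rule eq_matI)
  have e1: "{i. i < K \<and> i \<in> {x. x < K \<and> x \<in> I}} = {i. i < K \<and> i \<in> I}" by auto
  have e2: "{i. i < K \<and> i \<in> {x. x < K \<and> x \<in> J}} = {i. i < K \<and> i \<in> J}" by auto
  show "dim_row (submatrix Y I J) = dim_row (submatrix Y {x. x<K \<and> x\<in>I} {x. x<K \<and> x\<in>J})"
    "dim_col (submatrix Y I J) = dim_col (submatrix Y {x. x<K \<and> x\<in>I} {x. x<K \<and> x\<in>J})"
    using Y e1 e2 by (auto simp: dim_submatrix)
  fix a b assume "a < dim_row (submatrix Y {x. x<K \<and> x\<in>I} {x. x<K \<and> x\<in>J})"
     "b < dim_col (submatrix Y {x. x<K \<and> x\<in>I} {x. x<K \<and> x\<in>J})"
  then have a: "a < card {i. i < K \<and> i \<in> I}" and b: "b < card {i. i < K \<and> i \<in> J}"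
    using Y e1 e2 by (auto simp: dim_submatrix)
  show "submatrix Y I J $$ (a,b) = submatrix Y {x. x<K \<and> x\<in>I} {x. x<K \<and> x\<in>J} $$ (a,b)"
    using a b Y e1 e2 pick_reduce_set[OF a] pick_reduce_set[OF b] by (auto simp: submatrix_index)
qed

lemma pick_low:
  assumes L: "L \<subseteq> {..<n}" and p: "p < card L"
  shows "pick (L \<union> (\<lambda>k. n+k) ` H) p = pick L p"
proof -
  have e: "{a. a < n \<and> a \<in> L \<union> (\<lambda>k. n+k) ` H} = L" using L by auto
  have e2: "{a. a < n \<and> a \<in> L} = L" using L by auto
  show ?thesis using pick_reduce_set[of p n "L \<union> (\<lambda>k. n+k) ` H"] pick_reduce_set[of p n L] p e e2 by simp
qed

lemma pick_high:
  assumes L: "L \<subseteq> {..<n}" and fH: "finite H" and q: "q < card H"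
  shows "pick (L \<union> (\<lambda>k. n+k) ` H) (card L + q) = n + pick H q"
proof (rule pick_eqI)
  have fL: "finite L" using L finite_subset by auto
  have ph: "pick H q \<in> H" using pick_in_fin[OF fH q] .
  then show "n + pick H q \<in> L \<union> (\<lambda>k. n+k) ` H" by auto
  have e: "{a \<in> L \<union> (\<lambda>k. n+k) ` H. a < n + pick H q} = L \<union> (\<lambda>k. n+k) ` {a\<in>H. a < pick H q}"
    using L by auto
  have "card (L \<union> (\<lambda>k. n+k) ` {a\<in>H. a < pick H q}) = card L + card {a\<in>H. a < pick H q}"
    using L fL fH by (subst card_Un_disjoint) (auto simp: card_image)
  also have "card {a\<in>H. a < pick H q} = q" using card_pick[of q H] q by auto
  finally show "card {a \<in> L \<union> (\<lambda>k. n+k) ` H. a < n + pick H q} = card L + q" unfolding e .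
qed

lemma pick_high':
  assumes L: "L \<subseteq> {..<n}" and fH: "finite H" and q: "card L \<le> p" "p < card L + card H"
  shows "pick (L \<union> (\<lambda>k. n+k) ` H) p = n + pick H (p - card L)"
  using pick_high[OF L fH, of "p - card L"] q by simp

lemma block_sub:
  fixes X A B :: "'a::idom mat"
  assumes X: "X \<in> carrier_mat (n+m) (n+m)" and A: "A \<in> carrier_mat n n" and B: "B \<in> carrier_mat m m"
    and L: "L \<subseteq> {..<n}" and L': "L' \<subseteq> {..<n}" and H: "H \<subseteq> {..<m}" and H': "H' \<subseteq> {..<m}"
    and cL: "card L = card L'" and cH: "card H = card H'"
    and z1: "\<forall>p\<in>L. \<forall>h\<in>H'. X $$ (p, n+h) = 0"
    and z2: "\<forall>h\<in>H. \<forall>q\<in>L'. X $$ (n+h, q) = 0"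
    and xa: "\<forall>p\<in>L. \<forall>q\<in>L'. X $$ (p,q) = A $$ (p,q)"
    and xb: "\<forall>h\<in>H. \<forall>h'\<in>H'. X $$ (n+h,n+h') = B $$ (h,h')"
  shows "det (submatrix X (L \<union> (\<lambda>k. n+k) ` H) (L' \<union> (\<lambda>k. n+k) ` H')) = det (submatrix A L L') * det (submatrix B H H')"
proof -
  have fin: "finite L" "finite L'" "finite H" "finite H'" using finite_subset[OF L] finite_subset[OF L'] finite_subset[OF H] finite_subset[OF H'] by auto
  let ?I = "L \<union> (\<lambda>k. n+k) ` H"
  let ?J = "L' \<union> (\<lambda>k. n+k) ` H'"
  have I: "?I \<subseteq> {..<n+m}" and J: "?J \<subseteq> {..<n+m}" using L L' H H' by auto
  have cI: "card ?I = card L + card H" using L fin by (subst card_Un_disjoint) (auto simp: card_image)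
  have cJ: "card ?J = card L' + card H'" using L' fin by (subst card_Un_disjoint) (auto simp: card_image)
  define a where "a = card L"
  define b where "b = card H"
  have A': "submatrix A L L' \<in> carrier_mat a a" using submatrix_carrier[OF A L L'] cL a_def by simp
  have B': "submatrix B H H' \<in> carrier_mat b b" using submatrix_carrier[OF B H H'] cH b_def by simp
  have eq: "submatrix X ?I ?J = four_block_mat (submatrix A L L') (0\<^sub>m a b) (0\<^sub>m b a) (submatrix B H H')"
  proof (rule eq_matI)
    show "dim_row (submatrix X ?I ?J) = dim_row (four_block_mat (submatrix A L L') (0\<^sub>m a b) (0\<^sub>m b a) (submatrix B H H'))"
      using dim_submatrix_sq[OF X I J] A' B' cI a_def b_def by simp
    show "dim_col (submatrix X ?I ?J) = dim_col (four_block_mat (submatrix A L L') (0\<^sub>m a b) (0\<^sub>m b a) (submatrix B H H'))"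
      using dim_submatrix_sq[OF X I J] A' B' cJ cL cH a_def b_def by simp
    fix p q assume "p < dim_row (four_block_mat (submatrix A L L') (0\<^sub>m a b) (0\<^sub>m b a) (submatrix B H H'))"
      "q < dim_col (four_block_mat (submatrix A L L') (0\<^sub>m a b) (0\<^sub>m b a) (submatrix B H H'))"
    then have p: "p < a + b" and q: "q < a + b" using A' B' by auto
    have sx: "submatrix X ?I ?J $$ (p,q) = X $$ (pick ?I p, pick ?J q)"
      using p q cI cJ cL cH a_def b_def by (intro submatrix_idx[OF X I J]) auto
    show "submatrix X ?I ?J $$ (p,q) = four_block_mat (submatrix A L L') (0\<^sub>m a b) (0\<^sub>m b a) (submatrix B H H') $$ (p,q)"
    proof (cases "p < a")
      case pa: True
      have pI: "pick ?I p = pick L p" using pick_low[OF L] pa a_def by simp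
      have pL: "pick L p \<in> L" using pick_in_fin[OF fin(1)] pa a_def by simp
      show ?thesis
      proof (cases "q < a")
        case qa: True
        have qJ: "pick ?J q = pick L' q" using pick_low[OF L'] qa a_def cL by simp
        have qL: "pick L' q \<in> L'" using pick_in_fin[OF fin(2)] qa a_def cL by simp
        have "submatrix A L L' $$ (p,q) = A $$ (pick L p, pick L' q)"
          using pa qa a_def cL by (intro submatrix_idx[OF A L L']) auto
        then show ?thesis using sx pI qJ pL qL xa A' B' pa qa p q by simp
      next
        case qa: False
        have qJ: "pick ?J q = n + pick H' (q - a)" using pick_high'[OF L' fin(4)] qa q a_def b_def cL cH by simp
        have qH: "pick H' (q - a) \<in> H'" using pick_in_fin[OF fin(4)] qa q a_def b_def cH by simp
        show ?thesis using sx pI qJ pL qH z1 A' B' pa qa p q by simp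
      qed
    next
      case pa: False
      have pI: "pick ?I p = n + pick H (p - a)" using pick_high'[OF L fin(3)] pa p a_def b_def by simp
      have pH: "pick H (p - a) \<in> H" using pick_in_fin[OF fin(3)] pa p a_def b_def by simp
      show ?thesis
      proof (cases "q < a")
        case qa: True
        have qJ: "pick ?J q = pick L' q" using pick_low[OF L'] qa a_def cL by simp
        have qL: "pick L' q \<in> L'" using pick_in_fin[OF fin(2)] qa a_def cL by simp
        show ?thesis using sx pI qJ pH qL z2 A' B' pa qa p q by simp
      next
        case qa: False
        have qJ: "pick ?J q = n + pick H' (q - a)" using pick_high'[OF L' fin(4)] qa q a_def b_def cL cH by simp
        have qH: "pick H' (q - a) \<in> H'" using pick_in_fin[OF fin(4)] qa q a_def b_def cH by simp
        have "submatrix B H H' $$ (p - a, q - a) = B $$ (pick H (p - a), pick H' (q - a))"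
          using pa qa p q a_def b_def cH by (intro submatrix_idx[OF B H H']) auto
        then show ?thesis using sx pI qJ pH qH xb A' B' pa qa p q by simp
      qed
    qed
  qed
  show ?thesis unfolding eq by (rule det_four_block_mat_upper_right_zero[OF A' refl _ B']) simp
qed

lemma ZeroBlock:
  fixes X :: "'a::comm_ring_1 mat"
  assumes X: "X \<in> carrier_mat N N" and R: "R \<subseteq> {..<N}" and fC: "finite C"
    and cc: "card C < card R" and z: "\<forall>r\<in>R. \<forall>q<N. q \<notin> C \<longrightarrow> X $$ (r,q) = 0"
  shows "det X = 0"
proof -
  have "det X = (\<Sum>p\<in>{p. p permutes {0..<N}}. signof p * (\<Prod>a=0..<N. X $$ (a, p a)))"
    by (rule det_def'[OF X])
  also have "\<dots> = 0"
  proof (rule sum.neutral, intro ballI)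
    fix p assume "p \<in> {p. p permutes {0..<N}}"
    then have p: "p permutes {0..<N}" by simp
    have "\<not> p ` R \<subseteq> C"
    proof
      assume "p ` R \<subseteq> C"
      then have "card (p ` R) \<le> card C" using fC by (rule card_mono[rotated])
      moreover have "card (p ` R) = card R" using permutes_inj[OF p] by (simp add: card_image inj_on_subset)
      ultimately show False using cc by simp
    qed
    then obtain r where r: "r \<in> R" "p r \<notin> C" by auto
    have "r < N" using r R by auto
    then have "p r < N" using permutes_in_image[OF p] by auto
    then have "X $$ (r, p r) = 0" using z r by auto
    then have "(\<Prod>a=0..<N. X $$ (a, p a)) = 0" using \<open>r < N\<close> by (intro prod_zero) auto
    then show "signof p * (\<Prod>a=0..<N. X $$ (a, p a)) = 0" by simp
  qed
  finally show ?thesis .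
qed

context
  fixes A B :: "complex mat" and n m :: nat and i j :: "nat \<Rightarrow> nat" and \<alpha> \<beta> :: "nat \<Rightarrow> complex"
  assumes A: "A \<in> carrier_mat n n" and B: "B \<in> carrier_mat m m" and ij: "\<forall>k<m. i k < n \<and> j k < n"
begin

definition "Mst S T = mat (n+m) (n+m) (\<lambda>(p,q). if p < n then (if q < n then A $$ (p,q) else
    (if q - n \<in> T \<and> p = i (q-n) then \<alpha> (q-n) else 0)) else
    (if q < n then (if p - n \<in> S \<and> q = j (p-n) then \<beta> (p-n) else 0) else
    (if p - n \<notin> S \<and> q - n \<notin> T then B $$ (p-n, q-n) else 0)))"

definition "M0 = mat (n+m) (n+m) (\<lambda>(p,q). if p < n then (if q < n then A $$ (p,q) else
    (if p = i (q-n) then \<alpha> (q-n) else 0)) else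
    (if q < n then (if q = j (p-n) then \<beta> (p-n) else 0) else B $$ (p-n, q-n)))"

lemma blockM_eq: "blockM A B i j \<alpha> \<beta> = M0"
  using A B unfolding blockM_def M0_def
  by (intro eq_matI) (auto simp: upper_right_blk_def lower_left_blk_def)

definition "PS \<sigma> = {k. k < m \<and> \<sigma> (n+k) < n}"
definition "PT \<sigma> = {k. k < m \<and> (\<exists>p<n. \<sigma> p = n+k)}"

lemma prod_Mst:
  assumes s: "\<sigma> permutes {0..<n+m}" and S: "S \<subseteq> {..<m}" and T: "T \<subseteq> {..<m}"
  shows "(\<Prod>p=0..<n+m. Mst S T $$ (p, \<sigma> p)) =
    (if PS \<sigma> = S \<and> PT \<sigma> = T then (\<Prod>p=0..<n+m. M0 $$ (p, \<sigma> p)) else 0)"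
proof -
  have sl: "\<And>p. p < n+m \<Longrightarrow> \<sigma> p < n+m" using permutes_in_image[OF s] by auto
  have sinj: "\<And>p q. \<sigma> p = \<sigma> q \<Longrightarrow> p = q" using permutes_inj[OF s] by (auto simp: inj_def)
  have ssurj: "\<And>q. q < n+m \<Longrightarrow> \<exists>p<n+m. \<sigma> p = q"
    using permutes_in_image[OF s] permutes_surj[OF s] by (metis atLeastLessThan_iff surj_f_inv_f zero_le)
  show ?thesis
  proof (cases "PS \<sigma> = S \<and> PT \<sigma> = T")
    case True
    have "(\<Prod>p=0..<n+m. Mst S T $$ (p, \<sigma> p)) = (\<Prod>p=0..<n+m. M0 $$ (p, \<sigma> p))"
    proof (rule prod.cong[OF refl])
      fix p assume "p \<in> {0..<n+m}"
      then have p: "p < n+m" by simp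
      have sp: "\<sigma> p < n+m" using sl[OF p] .
      consider "p < n" "\<sigma> p < n" | "p < n" "\<sigma> p \<ge> n" | "p \<ge> n" "\<sigma> p < n" | "p \<ge> n" "\<sigma> p \<ge> n" by linarith
      then show "Mst S T $$ (p, \<sigma> p) = M0 $$ (p, \<sigma> p)"
      proof cases
        case 1 then show ?thesis using p sp unfolding Mst_def M0_def by simp
      next
        case 2
        then have "\<sigma> p - n \<in> T" using True p sp unfolding PT_def by force
        then show ?thesis using p sp 2 unfolding Mst_def M0_def by simp
      next
        case 3
        then have "p - n \<in> S" using True p sp unfolding PS_def by force
        then show ?thesis using p sp 3 unfolding Mst_def M0_def by simp
      next
        case 4
        then have "p - n \<notin> S" using True p sp unfolding PS_def by force
        moreover have "\<sigma> p - n \<notin> T"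
        proof
          assume "\<sigma> p - n \<in> T"
          then obtain p' where "p' < n" "\<sigma> p' = n + (\<sigma> p - n)" using True unfolding PT_def by auto
          then have "\<sigma> p' = \<sigma> p" using 4 by simp
          then show False using sinj \<open>p' < n\<close> 4 by fastforce
        qed
        ultimately show ?thesis using p sp 4 unfolding Mst_def M0_def by simp
      qed
    qed
    then show ?thesis using True by simp
  next
    case False
    have "\<exists>p<n+m. Mst S T $$ (p, \<sigma> p) = 0"
    proof (cases "PS \<sigma> = S")
      case False
      then obtain k where k: "k < m" "k \<in> S \<longleftrightarrow> \<not> \<sigma> (n+k) < n" using S unfolding PS_def by auto
      have "Mst S T $$ (n+k, \<sigma> (n+k)) = 0" using k sl[of "n+k"] unfolding Mst_def by auto
      then show ?thesis using k by (intro exI[of _ "n+k"]) auto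
    next
      case True
      with False have "PT \<sigma> \<noteq> T" by simp
      then obtain l where l: "l < m" "l \<in> T \<longleftrightarrow> \<not> (\<exists>p<n. \<sigma> p = n+l)" using T unfolding PT_def by auto
      show ?thesis
      proof (cases "l \<in> T")
        case True
        obtain p where p: "p < n+m" "\<sigma> p = n+l" using ssurj[of "n+l"] l by auto
        then have "p \<ge> n" using l True by (metis not_le)
        then have "Mst S T $$ (p, \<sigma> p) = 0" using p True l unfolding Mst_def by auto
        then show ?thesis using p by auto
      next
        case False
        then obtain p where p: "p < n" "\<sigma> p = n+l" using l by auto
        then have "Mst S T $$ (p, \<sigma> p) = 0" using l False unfolding Mst_def by auto
        then show ?thesis using p by (intro exI[of _ p]) auto
      qed
    qed
    then have z: "(\<Prod>p=0..<n+m. Mst S T $$ (p, \<sigma> p)) = 0" by (intro prod_zero) auto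
    show ?thesis by (subst if_not_P[OF False]) (rule z)
  qed
qed

lemma M0_carrier: "M0 \<in> carrier_mat (n+m) (n+m)" unfolding M0_def by auto
lemma Mst_carrier: "Mst S T \<in> carrier_mat (n+m) (n+m)" unfolding Mst_def by auto

lemma det_split: "det M0 = (\<Sum>ST \<in> Pow {..<m} \<times> Pow {..<m}. det (Mst (fst ST) (snd ST)))"
proof -
  let ?P = "{p. p permutes {0..<n+m}}"
  let ?Q = "Pow {..<m} \<times> Pow {..<m}"
  have "(\<Sum>ST \<in> ?Q. det (Mst (fst ST) (snd ST))) =
     (\<Sum>ST \<in> ?Q. \<Sum>\<sigma>\<in>?P. signof \<sigma> * (if (PS \<sigma>, PT \<sigma>) = ST then (\<Prod>p=0..<n+m. M0 $$ (p, \<sigma> p)) else 0))"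
  proof (rule sum.cong[OF refl])
    fix ST assume ST: "ST \<in> ?Q"
    show "det (Mst (fst ST) (snd ST)) = (\<Sum>\<sigma>\<in>?P. signof \<sigma> * (if (PS \<sigma>, PT \<sigma>) = ST then (\<Prod>p=0..<n+m. M0 $$ (p, \<sigma> p)) else 0))"
      unfolding det_def'[OF Mst_carrier]
    proof (rule sum.cong[OF refl])
      fix \<sigma> assume "\<sigma> \<in> ?P"
      then have s: "\<sigma> permutes {0..<n+m}" by simp
      have "(PS \<sigma>, PT \<sigma>) = ST \<longleftrightarrow> PS \<sigma> = fst ST \<and> PT \<sigma> = snd ST" by (cases ST) auto
      then show "signof \<sigma> * (\<Prod>p=0..<n+m. Mst (fst ST) (snd ST) $$ (p, \<sigma> p)) =
         signof \<sigma> * (if (PS \<sigma>, PT \<sigma>) = ST then (\<Prod>p=0..<n+m. M0 $$ (p, \<sigma> p)) else 0)"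
        using prod_Mst[OF s, of "fst ST" "snd ST"] ST by (auto simp: mem_Times_iff)
    qed
  qed
  also have "\<dots> = (\<Sum>\<sigma>\<in>?P. \<Sum>ST \<in> ?Q. signof \<sigma> * (if (PS \<sigma>, PT \<sigma>) = ST then (\<Prod>p=0..<n+m. M0 $$ (p, \<sigma> p)) else 0))"
    by (rule sum.swap)
  also have "\<dots> = (\<Sum>\<sigma>\<in>?P. signof \<sigma> * (\<Prod>p=0..<n+m. M0 $$ (p, \<sigma> p)))"
  proof (rule sum.cong[OF refl])
    fix \<sigma> assume "\<sigma> \<in> ?P"
    have "(PS \<sigma>, PT \<sigma>) \<in> ?Q" unfolding PS_def PT_def by auto
    then show "(\<Sum>ST \<in> ?Q. signof \<sigma> * (if (PS \<sigma>, PT \<sigma>) = ST then (\<Prod>p=0..<n+m. M0 $$ (p, \<sigma> p)) else 0))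
       = signof \<sigma> * (\<Prod>p=0..<n+m. M0 $$ (p, \<sigma> p))"
      by (simp add: sum_distrib_left[symmetric] sum.delta)
  qed
  also have "\<dots> = det M0" unfolding det_def'[OF M0_carrier] ..
  finally show ?thesis ..
qed

lemma det_Mst_zero:
  assumes S: "S \<subseteq> {..<m}" and T: "T \<subseteq> {..<m}" and c: "card S \<noteq> card T"
  shows "det (Mst S T) = 0"
proof -
  have fS: "finite S" "finite T" using S T finite_subset by auto
  show ?thesis
  proof (cases "card S < card T")
    case True
    let ?R = "(\<lambda>k. n+k) ` ({..<m} - S)"
    let ?C = "(\<lambda>k. n+k) ` ({..<m} - T)"
    have cR: "card ?R = m - card S" using S fS by (simp add: card_image card_Diff_subset)
    have cC: "card ?C = m - card T" using T fS by (simp add: card_image card_Diff_subset)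
    have "card T \<le> m" "card S \<le> m" using card_mono[OF _ S] card_mono[OF _ T] by auto
    then have "card ?C < card ?R" using cR cC True by linarith
    moreover have "\<forall>r\<in>?R. \<forall>q<n+m. q \<notin> ?C \<longrightarrow> Mst S T $$ (r,q) = 0"
    proof (intro ballI allI impI)
      fix r q assume r: "r \<in> ?R" and q: "q < n+m" "q \<notin> ?C"
      then obtain k where k: "r = n+k" "k < m" "k \<notin> S" by auto
      have "q < n \<or> q - n \<in> T" using q by (metis (no_types, lifting) DiffI add_diff_inverse_nat add_less_cancel_left imageI lessThan_iff)
      then show "Mst S T $$ (r,q) = 0" using k q unfolding Mst_def by auto
    qed
    ultimately show ?thesis by (intro ZeroBlock[OF Mst_carrier, of ?R ?C]) auto
  next
    case False
    then have lt: "card T < card S" using c by simp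
    let ?R = "{..<n} \<union> (\<lambda>k. n+k) ` S"
    let ?C = "{..<n} \<union> (\<lambda>k. n+k) ` T"
    have cR: "card ?R = n + card S" using fS by (subst card_Un_disjoint) (auto simp: card_image)
    have cC: "card ?C = n + card T" using fS by (subst card_Un_disjoint) (auto simp: card_image)
    have "\<forall>r\<in>?R. \<forall>q<n+m. q \<notin> ?C \<longrightarrow> Mst S T $$ (r,q) = 0"
    proof (intro ballI allI impI)
      fix r q assume r: "r \<in> ?R" and q: "q < n+m" "q \<notin> ?C"
      have qT: "q \<ge> n" "q - n \<notin> T" using q by (auto, metis add_diff_inverse_nat image_eqI not_less)
      show "Mst S T $$ (r,q) = 0"
      proof (cases "r < n")
        case True then show ?thesis using q qT unfolding Mst_def by auto
      next
        case False
        then obtain k where k: "r = n+k" "k \<in> S" using r by auto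
        then show ?thesis using q qT S unfolding Mst_def by auto
      qed
    qed
    moreover have "?R \<subseteq> {..<n+m}" using S by auto
    ultimately show ?thesis using cR cC lt fS by (intro ZeroBlock[OF Mst_carrier, of ?R ?C]) auto
  qed
qed

lemma submatrix_full:
  assumes X: "X \<in> carrier_mat N N"
  shows "submatrix X {..<N} {..<N} = X"
proof -
  have pk: "pick {..<N} p = p" if "p < N" for p
  proof (rule pick_eqI)
    have "{a \<in> {..<N}. a < p} = {..<p}" using that by auto
    then show "card {a \<in> {..<N}. a < p} = p" by simp
  qed (use that in auto)
  show ?thesis
    by (rule eq_matI) (use X pk dim_submatrix_sq[OF X, of "{..<N}" "{..<N}"] in \<open>auto simp: submatrix_idx[OF X]\<close>)
qed

lemma det_Mst:
  assumes S: "S \<subseteq> {..<m}" and T: "T \<subseteq> {..<m}" and c: "card S = card T"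
  shows "\<exists>e. (e = 1 \<or> e = -1) \<and> det (Mst S T) = e * (\<Prod>k\<in>T. \<alpha> k) * (\<Prod>k\<in>S. \<beta> k) * B_minor B S T * A_minor A i j S T"
proof -
  let ?N = "n+m"
  let ?X = "Mst S T"
  let ?c = "\<lambda>k. n+k"
  have X: "?X \<in> carrier_mat ?N ?N" by (rule Mst_carrier)
  have XT: "transpose_mat ?X \<in> carrier_mat ?N ?N" using X by auto
  have fS: "finite S" and fT: "finite T" using finite_subset[OF S] finite_subset[OF T] by auto
  have injc: "inj_on ?c U" for U by (auto simp: inj_on_def)
  define I1 where "I1 = {..<?N} - i ` T"
  define J1 where "J1 = {..<?N} - ?c ` T"
  define If where "If = I1 - ?c ` S"
  define Jf where "Jf = J1 - j ` S"
  have I1: "I1 \<subseteq> {..<?N}" and J1: "J1 \<subseteq> {..<?N}" unfolding I1_def J1_def by auto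
  have "\<exists>e. (e = 1 \<or> e = -1) \<and> det (submatrix ?X {..<?N} {..<?N}) = e * (if inj_on i T then
        (\<Prod>k\<in>T. \<alpha> k) * det (submatrix ?X ({..<?N} - i ` T) ({..<?N} - ?c ` T)) else 0)"
  proof (rule GL[OF X fT _ injc])
    show "\<forall>k\<in>T. n + k < ?N \<and> i k < ?N" using T ij by auto
    show "\<forall>k\<in>T. \<forall>r<?N. r \<noteq> i k \<longrightarrow> ?X $$ (r, n + k) = 0" using T unfolding Mst_def by auto
    show "\<forall>k\<in>T. ?X $$ (i k, n + k) = \<alpha> k"
    proof
      fix k assume "k \<in> T" then have "k < m" "i k < n" using T ij by auto
      then show "?X $$ (i k, n + k) = \<alpha> k" using \<open>k \<in> T\<close> unfolding Mst_def by auto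
    qed
    show "i ` T \<subseteq> {..<?N}" "?c ` T \<subseteq> {..<?N}" using T ij by auto
  qed simp_all
  then obtain e1 where e1: "e1 = 1 \<or> e1 = -1" and d1: "det ?X = e1 * (if inj_on i T then
        (\<Prod>k\<in>T. \<alpha> k) * det (submatrix ?X I1 J1) else 0)"
    unfolding submatrix_full[OF X] I1_def J1_def by blast
  have "\<exists>e. (e = 1 \<or> e = -1) \<and> det (submatrix (transpose_mat ?X) J1 I1) = e * (if inj_on j S then
        (\<Prod>k\<in>S. \<beta> k) * det (submatrix (transpose_mat ?X) (J1 - j ` S) (I1 - ?c ` S)) else 0)"
  proof (rule GL[OF XT fS _ injc])
    show "\<forall>k\<in>S. n + k < ?N \<and> j k < ?N" using S ij by auto
    show "\<forall>k\<in>S. \<forall>r<?N. r \<noteq> j k \<longrightarrow> transpose_mat ?X $$ (r, n + k) = 0" using S unfolding Mst_def by auto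
    show "\<forall>k\<in>S. transpose_mat ?X $$ (j k, n + k) = \<beta> k"
    proof
      fix k assume "k \<in> S" then have "k < m" "j k < n" using S ij by auto
      then show "transpose_mat ?X $$ (j k, n + k) = \<beta> k" using \<open>k \<in> S\<close> unfolding Mst_def by auto
    qed
    show "j ` S \<subseteq> J1" using S ij unfolding J1_def by auto
    show "?c ` S \<subseteq> I1" using S T ij unfolding I1_def by fastforce
  qed (use I1 J1 in auto)
  then obtain e2 where e2: "e2 = 1 \<or> e2 = -1" and d2': "det (submatrix (transpose_mat ?X) J1 I1) = e2 * (if inj_on j S then
        (\<Prod>k\<in>S. \<beta> k) * det (submatrix (transpose_mat ?X) (J1 - j ` S) (I1 - ?c ` S)) else 0)"
    by blast
  have t1: "det (submatrix ?X I1 J1) = det (submatrix (transpose_mat ?X) J1 I1)"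
    by (rule det_submatrix_transpose[OF X I1 J1])
  have t2: "det (submatrix ?X If Jf) = det (submatrix (transpose_mat ?X) (J1 - j ` S) (I1 - ?c ` S))"
    unfolding If_def Jf_def by (rule det_submatrix_transpose[OF X]) (use I1 J1 in auto)
  have d2: "det (submatrix ?X I1 J1) = e2 * (if inj_on j S then
        (\<Prod>k\<in>S. \<beta> k) * det (submatrix ?X If Jf) else 0)"
    unfolding t1 t2 by (rule d2')
  define L where "L = {..<n} - i ` T"
  define L' where "L' = {..<n} - j ` S"
  define H where "H = {..<m} - S"
  define H' where "H' = {..<m} - T"
  have Ifeq: "If = L \<union> ?c ` H"
  proof -
    have "x \<in> If \<longleftrightarrow> x \<in> L \<union> ?c ` H" for x
    proof (cases "x < n")
      case True then show ?thesis unfolding If_def I1_def L_def H_def by auto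
    next
      case False
      then obtain k where "x = n + k" by (metis le_add_diff_inverse not_less)
      moreover have "n + k \<notin> i ` T" using T ij by fastforce
      ultimately show ?thesis unfolding If_def I1_def L_def H_def by auto
    qed
    then show ?thesis by blast
  qed
  have Jfeq: "Jf = L' \<union> ?c ` H'"
  proof -
    have "x \<in> Jf \<longleftrightarrow> x \<in> L' \<union> ?c ` H'" for x
    proof (cases "x < n")
      case True then show ?thesis unfolding Jf_def J1_def L'_def H'_def by auto
    next
      case False
      then obtain k where "x = n + k" by (metis le_add_diff_inverse not_less)
      moreover have "n + k \<notin> j ` S" using S ij by fastforce
      ultimately show ?thesis unfolding Jf_def J1_def L'_def H'_def by auto
    qed
    then show ?thesis by blast
  qed
  have Amin: "A_minor A i j S T = (if inj_on i T \<and> inj_on j S then det (submatrix A L L') else 0)"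
  proof -
    have "card (i ` T) = card T \<longleftrightarrow> inj_on i T" using fT card_image eq_card_imp_inj_on by metis
    moreover have "card (j ` S) = card S \<longleftrightarrow> inj_on j S" using fS card_image eq_card_imp_inj_on by metis
    moreover have "submatrix A (- i ` T) (- j ` S) = submatrix A L L'"
    proof -
      have "{x. x < n \<and> x \<in> - i ` T} = L" "{x. x < n \<and> x \<in> - j ` S} = L'" unfolding L_def L'_def by auto
      then show ?thesis using submatrix_restrict[OF A, of "- i ` T" "- j ` S"] by simp
    qed
    ultimately show ?thesis unfolding A_minor_def del_rows_cols_def using c by auto
  qed
  have Bmin: "B_minor B S T = det (submatrix B H H')"
  proof -
    have "submatrix B (- S) (- T) = submatrix B H H'"
    proof -
      have "{x. x < m \<and> x \<in> - S} = H" "{x. x < m \<and> x \<in> - T} = H'" unfolding H_def H'_def by auto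
      then show ?thesis using submatrix_restrict[OF B, of "- S" "- T"] by simp
    qed
    then show ?thesis unfolding B_minor_def del_rows_cols_def by simp
  qed
  have blk: "det (submatrix ?X If Jf) = det (submatrix A L L') * det (submatrix B H H')"
    if inj: "inj_on i T" "inj_on j S"
    unfolding Ifeq Jfeq
  proof (rule block_sub[OF X A B])
    show "L \<subseteq> {..<n}" "L' \<subseteq> {..<n}" "H \<subseteq> {..<m}" "H' \<subseteq> {..<m}"
      unfolding L_def L'_def H_def H'_def by auto
    have "card (i ` T) = card T" "card (j ` S) = card S" using inj card_image by auto
    moreover have "i ` T \<subseteq> {..<n}" "j ` S \<subseteq> {..<n}" using S T ij by auto
    moreover have "finite (i ` T)" "finite (j ` S)" using fS fT by auto
    ultimately show "card L = card L'" unfolding L_def L'_def using c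
      by (simp add: card_Diff_subset)
    show "card H = card H'" unfolding H_def H'_def using c S T fS fT
      by (simp add: card_Diff_subset)
    show "\<forall>p\<in>L. \<forall>h\<in>H'. ?X $$ (p, n + h) = 0" unfolding L_def H'_def Mst_def by auto
    show "\<forall>h\<in>H. \<forall>q\<in>L'. ?X $$ (n + h, q) = 0" unfolding H_def L'_def Mst_def by auto
    show "\<forall>p\<in>L. \<forall>q\<in>L'. ?X $$ (p, q) = A $$ (p, q)" unfolding L_def L'_def Mst_def by auto
    show "\<forall>h\<in>H. \<forall>h'\<in>H'. ?X $$ (n + h, n + h') = B $$ (h, h')" unfolding H_def H'_def Mst_def by auto
  qed
  have "det ?X = (e1 * e2) * (\<Prod>k\<in>T. \<alpha> k) * (\<Prod>k\<in>S. \<beta> k) * B_minor B S T * A_minor A i j S T"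
    unfolding d1 d2 Amin Bmin using blk by (cases "inj_on i T"; cases "inj_on j S") simp_all
  moreover have "e1 * e2 = 1 \<or> e1 * e2 = -1" using e1 e2 by auto
  ultimately show ?thesis by blast
qed

lemma main_result:
  "\<exists>\<epsilon> :: nat set \<Rightarrow> nat set \<Rightarrow> complex.
           (\<forall>S T. \<epsilon> S T = 1 \<or> \<epsilon> S T = -1) \<and>
           det (blockM A B i j \<alpha> \<beta>) =
             (\<Sum>(S, T) \<in> {(S, T). S \<subseteq> {..<m} \<and> T \<subseteq> {..<m} \<and> card S = card T}.
                \<epsilon> S T * (\<Prod>k\<in>T. \<alpha> k) * (\<Prod>k\<in>S. \<beta> k) * B_minor B S T * A_minor A i j S T)"
proof -
  let ?Q = "{(S, T). S \<subseteq> {..<m} \<and> T \<subseteq> {..<m} \<and> card S = card T}"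
  let ?P = "Pow {..<m} \<times> Pow {..<m}"
  let ?F = "\<lambda>ST e. (e = 1 \<or> e = -1) \<and> det (Mst (fst ST) (snd ST)) = e * (\<Prod>k\<in>snd ST. \<alpha> k) *
     (\<Prod>k\<in>fst ST. \<beta> k) * B_minor B (fst ST) (snd ST) * A_minor A i j (fst ST) (snd ST)"
  have "\<forall>ST\<in>?Q. \<exists>e. ?F ST e"
  proof
    fix ST assume "ST \<in> ?Q"
    then obtain S T where ST: "ST = (S,T)" "S \<subseteq> {..<m}" "T \<subseteq> {..<m}" "card S = card T" by blast
    show "\<exists>e. ?F ST e" using det_Mst[OF ST(2-4)] unfolding ST(1) fst_conv snd_conv .
  qed
  from bchoice[OF this] obtain f where f: "\<forall>ST\<in>?Q. ?F ST (f ST)" by (elim exE)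
  define \<epsilon> where "\<epsilon> S T = (if (S,T) \<in> ?Q then f (S,T) else 1)" for S T
  have eps: "\<forall>S T. \<epsilon> S T = 1 \<or> \<epsilon> S T = -1"
  proof (intro allI)
    fix S T
    show "\<epsilon> S T = 1 \<or> \<epsilon> S T = -1"
    proof (cases "(S,T) \<in> ?Q")
      case True
      then have "?F (S,T) (f (S,T))" using f by (rule bspec[rotated])
      then have "f (S,T) = 1 \<or> f (S,T) = -1" by (rule conjunct1)
      then show ?thesis unfolding \<epsilon>_def using True by (simp only: if_True)
    next
      case False
      then show ?thesis unfolding \<epsilon>_def by (simp only: if_False simp_thms)
    qed
  qed
  have QP: "?Q \<subseteq> ?P" by auto
  have Z: "\<forall>ST\<in>?P - ?Q. det (Mst (fst ST) (snd ST)) = 0"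
  proof
    fix ST assume "ST \<in> ?P - ?Q"
    then obtain S T where ST: "ST = (S,T)" "S \<subseteq> {..<m}" "T \<subseteq> {..<m}" "card S \<noteq> card T" by blast
    show "det (Mst (fst ST) (snd ST)) = 0" using det_Mst_zero[OF ST(2-4)] unfolding ST(1) fst_conv snd_conv .
  qed
  have fP: "finite ?P" by simp
  have "det (blockM A B i j \<alpha> \<beta>) = (\<Sum>ST \<in> ?P. det (Mst (fst ST) (snd ST)))"
    unfolding blockM_eq by (rule det_split)
  also have "\<dots> = (\<Sum>ST \<in> ?Q. det (Mst (fst ST) (snd ST)))"
    by (rule sum.mono_neutral_right[OF fP QP Z])
  also have "\<dots> = (\<Sum>(S, T) \<in> ?Q. \<epsilon> S T * (\<Prod>k\<in>T. \<alpha> k) * (\<Prod>k\<in>S. \<beta> k) * B_minor B S T * A_minor A i j S T)"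
  proof (rule sum.cong[OF refl])
    fix ST assume ST: "ST \<in> ?Q"
    obtain S T where st: "ST = (S,T)" by (cases ST)
    have F: "?F ST (f ST)" using f ST by (rule bspec)
    have e: "\<epsilon> S T = f ST" using ST unfolding st \<epsilon>_def by simp
    show "det (Mst (fst ST) (snd ST)) = (case ST of (S,T) \<Rightarrow> \<epsilon> S T * (\<Prod>k\<in>T. \<alpha> k) * (\<Prod>k\<in>S. \<beta> k) * B_minor B S T * A_minor A i j S T)"
      using F e unfolding st by simp
  qed
  finally show ?thesis by (intro exI[of _ \<epsilon>] conjI eps)
qed

end

theorem lemmaA1:
  fixes A B :: "complex mat" and n m :: nat
    and i j :: "nat \<Rightarrow> nat" and \<alpha> \<beta> :: "nat \<Rightarrow> complex"
  assumes "A \<in> carrier_mat n n" and "B \<in> carrier_mat m m"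
    and "\<forall>k<m. i k < n \<and> j k < n"
  shows "\<exists>\<epsilon> :: nat set \<Rightarrow> nat set \<Rightarrow> complex.
           (\<forall>S T. \<epsilon> S T = 1 \<or> \<epsilon> S T = -1) \<and>
           det (blockM A B i j \<alpha> \<beta>) =
             (\<Sum>(S, T) \<in> {(S, T). S \<subseteq> {..<m} \<and> T \<subseteq> {..<m} \<and> card S = card T}.
                \<epsilon> S T * (\<Prod>k\<in>T. \<alpha> k) * (\<Prod>k\<in>S. \<beta> k) * B_minor B S T * A_minor A i j S T)"
  by (rule main_result[OF assms])

end
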